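(* For each $i\ge1$ let $f_i$ be a non-negative completely multiplicative function with $f_i(p) < 1$ for every prime $p$, and let $y_i \to \infty$ be a sequence of parameters. Define $\alpha_i = \frac{(\log \log y_i)^2}{\log y_i}$. Suppose that for all $i$ \[ \sum_p \log p\, \frac{f_i(p)}{1-f_i(p)} < \log y_i - \frac{\log y_i}{\log \log y_i}\] and that \[\sum_{\substack{p,\,k\ge1\\ k \log p > \log y_i/(\log \log y_i)^4}} f_i(p)^k p^{k\alpha_i} = o(1), \qquad i \to \infty,\] the sums being over primes $p$. Then \[\sum_{n \leq y_i} f_i(n) = (1 + o(1)) \sum_{n = 1}^\infty f_i(n), \qquad i \to \infty.\] *)

theory Defs
  imports "HOL-Analysis.Analysis" "HOL-Library.Landau_Symbols" "HOL-Computational_Algebra.Primes"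
begin

text \<open>Completely multiplicative arithmetic function (values at positive integers;
  the value at 0 is irrelevant).\<close>
definition completely_multiplicative :: "(nat \<Rightarrow> real) \<Rightarrow> bool" where
  "completely_multiplicative f \<longleftrightarrow>
     f 1 = 1 \<and> (\<forall>m n. m > 0 \<longrightarrow> n > 0 \<longrightarrow> f (m * n) = f m * f n)"

end

theory Submission
  imports Defs
begin


instance ennreal :: t3_space
proof
  fix S :: "ennreal set" and y assume S: "closed S" "y \<notin> S"
  have T: "open (- S)" "y \<in> - S" using S by auto
  obtain U1 V1 where U1: "open U1" "open V1" "y \<in> U1" "U1 \<inter> V1 = {}"
    "\<And>s. s \<in> S \<Longrightarrow> s > y \<Longrightarrow> s \<in> V1"
  proof (cases "\<exists>z. y < z")
    case True
    then obtain z where "y < z" by blast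
    from open_right[OF T this] obtain b where b: "b > y" "{y..<b} \<subseteq> - S" by blast
    obtain b' where b': "y < b'" "b' < b" using dense[OF b(1)] by blast
    show ?thesis
    proof (rule that[of "{..<b'}" "{b'<..}"])
      fix s assume "s \<in> S" "s > y"
      then have "\<not> s < b" using b(2) by (auto simp: subset_iff)
      then show "s \<in> {b'<..}" using b' by auto
    qed (use b' in auto)
  next
    case False
    show ?thesis by (rule that[of UNIV "{}"]) (use False in auto)
  qed
  obtain U2 V2 where U2: "open U2" "open V2" "y \<in> U2" "U2 \<inter> V2 = {}"
    "\<And>s. s \<in> S \<Longrightarrow> s < y \<Longrightarrow> s \<in> V2"
  proof (cases "\<exists>z. z < y")
    case True
    then obtain z where "z < y" by blast
    from open_left[OF T this] obtain b where b: "b < y" "{b<..y} \<subseteq> - S" by blast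
    obtain b' where b': "b < b'" "b' < y" using dense[OF b(1)] by blast
    show ?thesis
    proof (rule that[of "{b'<..}" "{..<b'}"])
      fix s assume "s \<in> S" "s < y"
      then have "\<not> s > b" using b(2) by (auto simp: subset_iff)
      then show "s \<in> {..<b'}" using b' by auto
    qed (use b' in auto)
  next
    case False
    show ?thesis by (rule that[of UNIV "{}"]) (use False in auto)
  qed
  show "\<exists>U V. open U \<and> open V \<and> y \<in> U \<and> S \<subseteq> V \<and> U \<inter> V = {}"
  proof (intro exI conjI)
    show "open (U1 \<inter> U2)" "open (V1 \<union> V2)" using U1 U2 by auto
    show "y \<in> U1 \<inter> U2" using U1 U2 by auto
    show "S \<subseteq> V1 \<union> V2"
    proof
      fix s assume "s \<in> S"
      then have "s \<noteq> y" using S by auto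
      then show "s \<in> V1 \<union> V2" using U1(5) U2(5) \<open>s \<in> S\<close> by (cases "s < y") auto
    qed
    show "U1 \<inter> U2 \<inter> (V1 \<union> V2) = {}" using U1 U2 by auto
  qed
qed


lemma enn_summable: "(g :: 'a \<Rightarrow> ennreal) summable_on A"
  by (rule nonneg_summable_on_complete) auto

lemma enn_Sigma:
  fixes g :: "'a \<times> 'b \<Rightarrow> ennreal"
  shows "infsum g (Sigma A B) = infsum (\<lambda>x. infsum (\<lambda>y. g (x,y)) (B x)) A"
proof -
  have "((\<lambda>x. infsum (\<lambda>y. g (x,y)) (B x)) has_sum infsum g (Sigma A B)) A"
    by (rule has_sum_SigmaD[OF has_sum_infsum]) (auto intro: has_sum_infsum simp: enn_summable)
  then show ?thesis by (simp add: infsumI)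
qed

lemma enn_cmult:
  fixes g :: "'a \<Rightarrow> ennreal"
  shows "infsum (\<lambda>x. c * g x) A = c * infsum g A"
proof -
  have "infsum (\<lambda>x. c * g x) A = (SUP F\<in>{F. finite F \<and> F\<subseteq>A}. sum (\<lambda>x. c * g x) F)"
    by (rule nonneg_infsum_complete) auto
  also have "\<dots> = (SUP F\<in>{F. finite F \<and> F\<subseteq>A}. c * sum g F)"
    by (simp add: sum_distrib_left)
  also have "\<dots> = c * (SUP F\<in>{F. finite F \<and> F\<subseteq>A}. sum g F)"
    by (simp add: SUP_mult_left_ennreal)
  also have "\<dots> = c * infsum g A"
    by (subst nonneg_infsum_complete[of A g]) auto
  finally show ?thesis .
qed

lemma enn_add:
  fixes g h :: "'a \<Rightarrow> ennreal"
  shows "infsum (\<lambda>x. g x + h x) A = infsum g A + infsum h A"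
  by (rule infsum_add) (simp_all add: enn_summable)

lemma enn_mono:
  fixes g h :: "'a \<Rightarrow> ennreal"
  assumes "\<And>x. x \<in> A \<Longrightarrow> g x \<le> h x"
  shows "infsum g A \<le> infsum h A"
  by (rule infsum_mono) (simp_all add: assms enn_summable)

lemma enn_subset:
  fixes g :: "'a \<Rightarrow> ennreal"
  assumes "A \<subseteq> B"
  shows "infsum g A \<le> infsum g B"
  by (rule infsum_mono_neutral) (use assms in \<open>auto simp: enn_summable\<close>)

lemma enn_Un:
  fixes g :: "'a \<Rightarrow> ennreal"
  assumes "A \<inter> B = {}"
  shows "infsum g (A \<union> B) = infsum g A + infsum g B"
  by (rule infsum_Un_disjoint) (use assms in \<open>auto simp: enn_summable\<close>)

lemma enn_real:
  fixes f :: "'a \<Rightarrow> real"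
  assumes "\<And>x. x \<in> A \<Longrightarrow> f x \<ge> 0" "f summable_on A"
  shows "infsum (\<lambda>x. ennreal (f x)) A = ennreal (infsum f A)"
proof -
  have "ennreal (infsum f A) = (SUP F\<in>{F. finite F \<and> F \<subseteq> A}. (ennreal (sum f F)))"
    by (rule infsum_nonneg_is_SUPREMUM_ennreal) (use assms in \<open>auto simp: enn_summable\<close>)
  also have "\<dots> = (SUP F\<in>{F. finite F \<and> F \<subseteq> A}. sum (\<lambda>x. ennreal (f x)) F)"
    by (intro SUP_cong refl sum_ennreal[symmetric]) (use assms in \<open>auto simp: enn_summable\<close>)
  also have "\<dots> = infsum (\<lambda>x. ennreal (f x)) A"
    by (rule nonneg_infsum_complete[symmetric]) auto
  finally show ?thesis ..
qed

lemma enn_fin: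
  fixes f :: "'a \<Rightarrow> real"
  assumes "\<And>x. x \<in> A \<Longrightarrow> f x \<ge> 0" "infsum (\<lambda>x. ennreal (f x)) A \<noteq> \<infinity>"
  shows "f summable_on A"
proof (rule nonneg_bdd_above_summable_on)
  show "\<And>x. x \<in> A \<Longrightarrow> f x \<ge> 0" by fact
  show "bdd_above (sum f ` {F. F \<subseteq> A \<and> finite F})"
  proof (rule bdd_aboveI)
    fix s assume "s \<in> sum f ` {F. F \<subseteq> A \<and> finite F}"
    then obtain F where F: "F \<subseteq> A" "finite F" "s = sum f F" by auto
    have "ennreal s = sum (\<lambda>x. ennreal (f x)) F"
      using F assms(1) by (subst sum_ennreal) auto
    also have "\<dots> = infsum (\<lambda>x. ennreal (f x)) F" using F by simp
    also have "\<dots> \<le> infsum (\<lambda>x. ennreal (f x)) A" by (rule enn_subset[OF F(1)])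
    finally have "ennreal s \<le> infsum (\<lambda>x. ennreal (f x)) A" .
    then show "s \<le> enn2real (infsum (\<lambda>x. ennreal (f x)) A)"
    proof -
      have "s \<ge> 0" using F assms(1) by (auto intro!: sum_nonneg)
      have "enn2real (ennreal s) \<le> enn2real (infsum (\<lambda>x. ennreal (f x)) A)"
        by (rule enn2real_mono[OF \<open>ennreal s \<le> _\<close>]) (use assms(2) in \<open>simp add: top.not_eq_extremum\<close>)
      then show ?thesis using \<open>s \<ge> 0\<close> by simp
    qed
  qed
qed



definition Qs :: "nat \<Rightarrow> (nat \<times> nat) set" where
  "Qs n = {(p,k). prime p \<and> k \<ge> 1 \<and> p ^ k dvd n}"

lemma Qs_eq:
  assumes "n > 0"
  shows "Qs n = Sigma (prime_factors n) (\<lambda>p. {1..multiplicity p n})"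
proof safe
  fix p k assume "(p,k) \<in> Qs n"
  then have pk: "prime p" "k \<ge> 1" "p ^ k dvd n" by (auto simp: Qs_def)
  have "p dvd p ^ k" using pk(2) by (cases k) auto
  then have "p dvd n" using pk(3) by (rule dvd_trans)
  then show "p \<in> prime_factors n" using pk assms by (auto simp: in_prime_factors_iff)
  have "k \<le> multiplicity p n" using pk assms
    by (intro multiplicity_geI) (auto simp: prime_gt_1_nat)
  then show "k \<in> {1..multiplicity p n}" using pk by auto
next
  fix p k assume "p \<in> prime_factors n" "k \<in> {1..multiplicity p n}"
  then show "(p,k) \<in> Qs n"
    by (auto simp: Qs_def multiplicity_dvd' in_prime_factors_imp_prime)
qed

lemma Qs_finite: "n > 0 \<Longrightarrow> finite (Qs n)"
  by (simp add: Qs_eq)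

lemma ln_decomp:
  assumes "n > 0"
  shows "ln (real n) = (\<Sum>(p,k)\<in>Qs n. ln (real p))"
proof -
  have "(\<Sum>(p,k)\<in>Qs n. ln (real p)) = (\<Sum>p\<in>prime_factors n. \<Sum>k\<in>{1..multiplicity p n}. ln (real p))"
    unfolding Qs_eq[OF assms] by (rule sum.Sigma[symmetric]) auto
  also have "\<dots> = (\<Sum>p\<in>prime_factors n. real (multiplicity p n) * ln (real p))"
    by simp
  also have "\<dots> = (\<Sum>p\<in>prime_factors n. ln (real p ^ multiplicity p n))"
    by (intro sum.cong refl) (auto simp: ln_realpow in_prime_factors_imp_prime prime_gt_0_nat)
  also have "\<dots> = ln (\<Prod>p\<in>prime_factors n. real p ^ multiplicity p n)"
    by (subst ln_prod) (auto simp: in_prime_factors_imp_prime prime_gt_0_nat)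
  also have "(\<Prod>p\<in>prime_factors n. real p ^ multiplicity p n) = real n"
    by (subst (2) prime_factorization_nat[OF assms]) simp
  finally show ?thesis ..
qed

lemma cm_mult: "completely_multiplicative f \<Longrightarrow> m > 0 \<Longrightarrow> n > 0 \<Longrightarrow> f (m * n) = f m * f n"
  by (simp add: completely_multiplicative_def)

lemma cm_pow: 
  assumes "completely_multiplicative f" "p > 0"
  shows "f (p ^ k) = f p ^ k"
proof (induction k)
  case 0 then show ?case using assms by (simp add: completely_multiplicative_def)
next
  case (Suc k) then show ?case using assms cm_mult[OF assms(1), of p "p^k"] by simp
qed

lemma ln_prime_pos: "prime p \<Longrightarrow> ln (real p) > 0"
  using prime_gt_1_nat[of p] by simp

lemma ln_prime_nonneg: "prime p \<Longrightarrow> ln (real p) \<ge> 0"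
  using ln_prime_pos[of p] by simp

lemma key:
  fixes f :: "nat \<Rightarrow> real" and w :: "nat \<Rightarrow> real"
  assumes cm: "completely_multiplicative f" and nn: "\<And>n. f n \<ge> 0" and wn: "\<And>n. w n \<ge> 0"
    and A: "A \<subseteq> {1..}"
  shows "(\<Sum>\<^sub>\<infinity>n\<in>A. ennreal (f n * ln (real n) * w n)) =
    (\<Sum>\<^sub>\<infinity>((p,k),m)\<in>{((p,k),m). prime p \<and> k \<ge> 1 \<and> m \<ge> 1 \<and> p^k*m \<in> A}.
        ennreal (ln (real p) * f p ^ k * f m * w (p^k*m)))"
proof -
  define g where "g = (\<lambda>(n::nat,(p::nat,k::nat)). ennreal (ln (real p) * f p ^ k * f (n div p^k) * w n))"
  have "(\<Sum>\<^sub>\<infinity>n\<in>A. ennreal (f n * ln (real n) * w n)) = (\<Sum>\<^sub>\<infinity>n\<in>A. \<Sum>\<^sub>\<infinity>pk\<in>Qs n. g (n,pk))"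
  proof (intro infsum_cong)
    fix n assume "n \<in> A"
    then have n0: "n > 0" using A by auto
    have eq: "f n = f p ^ k * f (n div p ^ k)" if "(p,k) \<in> Qs n" for p k
    proof -
      from that have "prime p" "p^k dvd n" by (auto simp: Qs_def)
      then have "n = p^k * (n div p^k)" by simp
      moreover have "n div p^k > 0" using n0 \<open>p^k dvd n\<close>
        by (metis \<open>n = _\<close> gr0I mult_0_right)
      ultimately have "f n = f (p^k) * f (n div p^k)"
        using cm_mult[OF cm, of "p^k" "n div p^k"] \<open>prime p\<close> prime_gt_0_nat
        by (metis zero_less_power)
      then show ?thesis using cm_pow[OF cm] \<open>prime p\<close> prime_gt_0_nat by simp
    qed
    have "f n * ln (real n) * w n = (\<Sum>(p,k)\<in>Qs n. ln (real p) * f p ^ k * f (n div p^k) * w n)"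
      unfolding ln_decomp[OF n0] sum_distrib_left sum_distrib_right
      by (intro sum.cong refl) (auto simp: eq)
    moreover have "(\<Sum>pk\<in>Qs n. g (n,pk)) = (\<Sum>pk\<in>Qs n. ennreal (case pk of (p,k) \<Rightarrow> ln (real p) * f p ^ k * f (n div p^k) * w n))"
      unfolding g_def by (intro sum.cong refl) (auto split: prod.splits)
    moreover have "\<dots> = ennreal (\<Sum>pk\<in>Qs n. case pk of (p,k) \<Rightarrow> ln (real p) * f p ^ k * f (n div p^k) * w n)"
      using nn wn
      by (intro sum_ennreal)
         (auto intro!: mult_nonneg_nonneg simp: Qs_def ln_prime_nonneg split: prod.splits)
    ultimately have "ennreal (f n * ln (real n) * w n) = (\<Sum>pk\<in>Qs n. g (n,pk))"
      by (simp add: split_beta)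
    then show "ennreal (f n * ln (real n) * w n) = (\<Sum>\<^sub>\<infinity>pk\<in>Qs n. g (n,pk))"
      using Qs_finite[OF n0] by simp
  qed
  also have "\<dots> = infsum g (Sigma A Qs)"
    by (rule enn_Sigma[symmetric])
  also have "\<dots> = (\<Sum>\<^sub>\<infinity>((p,k),m)\<in>{((p,k),m). prime p \<and> k \<ge> 1 \<and> m \<ge> 1 \<and> p^k*m \<in> A}.
        ennreal (ln (real p) * f p ^ k * f m * w (p^k*m)))"
  proof (rule infsum_reindex_bij_witness[where j = "\<lambda>(n,(p,k)). ((p,k), n div p^k)"
        and i = "\<lambda>((p,k),m). (p^k*m, (p,k))"])
    fix a assume "a \<in> Sigma A Qs"
    then obtain n p k where a: "a = (n,(p,k))" "n \<in> A" "prime p" "k \<ge> 1" "p^k dvd n"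
      by (auto simp: Qs_def)
    then have n0: "n > 0" using A by auto
    show "(\<lambda>((p,k),m). (p^k*m, (p,k))) ((\<lambda>(n,(p,k)). ((p,k), n div p^k)) a) = a"
      using a by simp
    show "(\<lambda>(n,(p,k)). ((p,k), n div p^k)) a \<in> {((p,k),m). prime p \<and> k \<ge> 1 \<and> m \<ge> 1 \<and> p^k*m \<in> A}"
      using a n0 by (auto elim!: dvdE)
    show "(\<lambda>((p,k),m). ennreal (ln (real p) * f p ^ k * f m * w (p^k*m))) ((\<lambda>(n,(p,k)). ((p,k), n div p^k)) a) = g a"
      using a by (auto simp: g_def)
  next
    fix b assume "b \<in> {((p,k),m). prime p \<and> k \<ge> 1 \<and> m \<ge> 1 \<and> p^k*m \<in> A}"
    then obtain p k m where b: "b = ((p,k),m)" "prime p" "k \<ge> 1" "m \<ge> 1" "p^k*m \<in> A" by auto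
    show "(\<lambda>(n,(p,k)). ((p,k), n div p^k)) ((\<lambda>((p,k),m). (p^k*m, (p,k))) b) = b"
      using b prime_gt_0_nat[OF b(2)] by simp
    show "(\<lambda>((p,k),m). (p^k*m, (p,k))) b \<in> Sigma A Qs"
      using b by (auto simp: Qs_def)
  qed
  finally show ?thesis .
qed



lemma geom_enn:
  fixes x c :: real
  assumes "0 \<le> x" "x < 1" "0 \<le> c"
  shows "(\<Sum>\<^sub>\<infinity>k\<in>{1..}. ennreal (c * x ^ k)) = ennreal (c * (x / (1 - x)))"
proof -
  have hs: "((\<lambda>n. x ^ n) has_sum (1 / (1 - x))) UNIV"
    by (rule sums_nonneg_imp_has_sum) (use assms in \<open>auto intro!: geometric_sums\<close>)
  have "(\<Sum>\<^sub>\<infinity>k\<in>{1..}. ennreal (c * x ^ k)) = (\<Sum>\<^sub>\<infinity>n\<in>UNIV. ennreal (c * x ^ Suc n))"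
    by (rule infsum_reindex_bij_witness[where j = "\<lambda>k. k - 1" and i = Suc]) auto
  also have "\<dots> = (\<Sum>\<^sub>\<infinity>n\<in>UNIV. ennreal (c * x) * ennreal (x ^ n))"
    using assms by (intro infsum_cong) (simp add: ennreal_mult[symmetric] mult_ac)
  also have "\<dots> = ennreal (c * x) * (\<Sum>\<^sub>\<infinity>n\<in>UNIV. ennreal (x ^ n))"
    by (rule enn_cmult)
  also have "(\<Sum>\<^sub>\<infinity>n\<in>UNIV. ennreal (x ^ n)) = ennreal (1 / (1 - x))"
    using hs assms by (subst enn_real) (auto simp: has_sum_imp_summable infsumI)
  also have "ennreal (c * x) * ennreal (1 / (1 - x)) = ennreal (c * (x / (1 - x)))"
    using assms by (simp add: ennreal_mult[symmetric])
  finally show ?thesis .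
qed

definition PP :: "(nat \<times> nat) set" where "PP = {(p,k). prime p \<and> k \<ge> 1}"

definition Lenn :: "(nat \<Rightarrow> real) \<Rightarrow> ennreal" where
  "Lenn f = (\<Sum>\<^sub>\<infinity>(p,k)\<in>PP. ennreal (ln (real p) * f p ^ k))"

definition Venn :: "(nat \<Rightarrow> real) \<Rightarrow> ennreal" where
  "Venn f = (\<Sum>\<^sub>\<infinity>(p,k)\<in>PP. ennreal (real k * ln (real p) ^ 2 * f p ^ k))"

lemma Lenn_eq:
  assumes nn: "\<And>n. f n \<ge> 0" and lt1: "\<And>p. prime p \<Longrightarrow> f p < 1"
    and s1: "(\<lambda>p. ln (real p) * (f p / (1 - f p))) summable_on {p. prime p}"
  shows "Lenn f = ennreal (\<Sum>\<^sub>\<infinity>p\<in>{p. prime p}. ln (real p) * (f p / (1 - f p)))"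
proof -
  have "PP = Sigma {p. prime p} (\<lambda>_. {1..})" by (auto simp: PP_def)
  then have "Lenn f = (\<Sum>\<^sub>\<infinity>(p,k)\<in>Sigma {p. prime p} (\<lambda>_. {1..}). ennreal (ln (real p) * f p ^ k))"
    unfolding Lenn_def by simp
  also have "\<dots> = (\<Sum>\<^sub>\<infinity>p\<in>{p. prime p}. \<Sum>\<^sub>\<infinity>k\<in>{1..}. ennreal (ln (real p) * f p ^ k))"
    by (subst enn_Sigma) simp
  also have "\<dots> = (\<Sum>\<^sub>\<infinity>p\<in>{p. prime p}. ennreal (ln (real p) * (f p / (1 - f p))))"
    by (intro infsum_cong geom_enn) (auto simp: nn lt1 ln_prime_nonneg)
  also have "\<dots> = ennreal (\<Sum>\<^sub>\<infinity>p\<in>{p. prime p}. ln (real p) * (f p / (1 - f p)))"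
    by (rule enn_real[OF _ s1]) (auto simp: nn lt1 ln_prime_nonneg less_imp_le)
  finally show ?thesis .
qed

lemma C1:
  assumes cm: "completely_multiplicative f" and nn: "\<And>n. f n \<ge> 0"
  shows "(\<Sum>\<^sub>\<infinity>n\<in>{1..N}. ennreal (f n * ln (real n))) \<le> Lenn f * (\<Sum>\<^sub>\<infinity>m\<in>{1..N}. ennreal (f m))"
proof -
  have "(\<Sum>\<^sub>\<infinity>n\<in>{1..N}. ennreal (f n * ln (real n))) = (\<Sum>\<^sub>\<infinity>n\<in>{1..N}. ennreal (f n * ln (real n) * 1))"
    by simp
  also have "\<dots> = (\<Sum>\<^sub>\<infinity>((p,k),m)\<in>{((p,k),m). prime p \<and> k \<ge> 1 \<and> m \<ge> 1 \<and> p^k*m \<in> {1..N}}.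
        ennreal (ln (real p) * f p ^ k * f m * 1))"
    by (rule key[OF cm nn]) auto
  also have "\<dots> \<le> (\<Sum>\<^sub>\<infinity>((p,k),m)\<in>Sigma PP (\<lambda>_. {1..N}). ennreal (ln (real p) * f p ^ k * f m * 1))"
  proof (rule enn_subset, rule subsetI)
    fix x assume "x \<in> {((p,k),m). prime p \<and> k \<ge> 1 \<and> m \<ge> 1 \<and> p^k*m \<in> {1..N}}"
    then obtain p k m where H: "prime p" "k \<ge> 1" "m \<ge> 1" "p^k*m \<in> {1..N}" and x: "x = ((p,k),m)"
      by auto
    have "p^k \<ge> 1" using prime_gt_0_nat[OF H(1)] by simp
    then have "m \<le> p^k * m" by simp
    then have "m \<le> N" using H(4) by (meson atLeastAtMost_iff le_trans)
    then show "x \<in> Sigma PP (\<lambda>_. {1..N})" using H x by (auto simp: PP_def)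
  qed
  also have "\<dots> = (\<Sum>\<^sub>\<infinity>(p,k)\<in>PP. \<Sum>\<^sub>\<infinity>m\<in>{1..N}. ennreal (ln (real p) * f p ^ k) * ennreal (f m))"
    by (subst enn_Sigma)
       (auto intro!: infsum_cong simp: split_beta' PP_def ennreal_mult'' ln_prime_nonneg nn)
  also have "\<dots> = (\<Sum>\<^sub>\<infinity>(p,k)\<in>PP. ennreal (ln (real p) * f p ^ k) * (\<Sum>\<^sub>\<infinity>m\<in>{1..N}. ennreal (f m)))"
    by (simp add: enn_cmult split_beta')
  also have "\<dots> = Lenn f * (\<Sum>\<^sub>\<infinity>m\<in>{1..N}. ennreal (f m))"
    unfolding Lenn_def by (subst mult.commute, subst enn_cmult[symmetric]) (simp add: mult.commute split_beta')
  finally show ?thesis .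
qed

lemma enn_prod:
  fixes g :: "'a \<Rightarrow> ennreal" and h :: "'b \<Rightarrow> ennreal"
  shows "(\<Sum>\<^sub>\<infinity>(x,y)\<in>A \<times> B. g x * h y) = infsum g A * infsum h B"
proof -
  have "(\<Sum>\<^sub>\<infinity>(x,y)\<in>A \<times> B. g x * h y) = (\<Sum>\<^sub>\<infinity>x\<in>A. \<Sum>\<^sub>\<infinity>y\<in>B. g x * h y)"
    by (subst enn_Sigma) simp
  also have "\<dots> = (\<Sum>\<^sub>\<infinity>x\<in>A. g x * infsum h B)"
    by (simp add: enn_cmult)
  also have "\<dots> = (\<Sum>\<^sub>\<infinity>x\<in>A. infsum h B * g x)"
    by (simp add: mult.commute)
  also have "\<dots> = infsum h B * infsum g A" by (rule enn_cmult)
  finally show ?thesis by (simp add: mult.commute)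
qed

lemma enn_prod2:
  fixes g1 g2 :: "'a \<Rightarrow> ennreal" and h1 h2 :: "'b \<Rightarrow> ennreal"
  shows "(\<Sum>\<^sub>\<infinity>(x,y)\<in>A \<times> B. g1 x * h1 y + g2 x * h2 y) = infsum g1 A * infsum h1 B + infsum g2 A * infsum h2 B"
proof -
  have "(\<Sum>\<^sub>\<infinity>(x,y)\<in>A \<times> B. g1 x * h1 y + g2 x * h2 y) =
     (\<Sum>\<^sub>\<infinity>z\<in>A \<times> B. (case z of (x,y) \<Rightarrow> g1 x * h1 y) + (case z of (x,y) \<Rightarrow> g2 x * h2 y))"
    by (intro infsum_cong) auto
  also have "\<dots> = (\<Sum>\<^sub>\<infinity>(x,y)\<in>A \<times> B. g1 x * h1 y) + (\<Sum>\<^sub>\<infinity>(x,y)\<in>A \<times> B. g2 x * h2 y)"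
    by (rule enn_add)
  finally show ?thesis by (simp add: enn_prod)
qed

lemma C2:
  assumes cm: "completely_multiplicative f" and nn: "\<And>n. f n \<ge> 0"
  shows "(\<Sum>\<^sub>\<infinity>n\<in>{1..}. ennreal (f n * ln (real n))) = Lenn f * (\<Sum>\<^sub>\<infinity>m\<in>{1..}. ennreal (f m))"
proof -
  have "(\<Sum>\<^sub>\<infinity>n\<in>{1..}. ennreal (f n * ln (real n))) = (\<Sum>\<^sub>\<infinity>n\<in>{1..}. ennreal (f n * ln (real n) * 1))"
    by simp
  also have "\<dots> = (\<Sum>\<^sub>\<infinity>((p,k),m)\<in>{((p,k),m). prime p \<and> k \<ge> 1 \<and> m \<ge> 1 \<and> p^k*m \<in> {1..}}.
        ennreal (ln (real p) * f p ^ k * f m * 1))"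
    by (rule key[OF cm nn]) auto
  also have "{((p,k),m). prime p \<and> k \<ge> 1 \<and> m \<ge> 1 \<and> p^k*m \<in> {1..}} = PP \<times> {1..}"
  proof (rule set_eqI)
    fix x :: "(nat \<times> nat) \<times> nat"
    obtain p k m where x: "x = ((p,k),m)" by (metis prod.collapse)
    show "x \<in> {((p,k),m). prime p \<and> k \<ge> 1 \<and> m \<ge> 1 \<and> p^k*m \<in> {1..}} \<longleftrightarrow> x \<in> PP \<times> {1..}"
      unfolding x PP_def using prime_gt_0_nat[of p] by (auto simp: Suc_le_eq)
  qed
  also have "(\<Sum>\<^sub>\<infinity>((p,k),m)\<in>PP \<times> {1..}. ennreal (ln (real p) * f p ^ k * f m * 1)) =
      (\<Sum>\<^sub>\<infinity>(pk,m)\<in>PP \<times> {1..}. (\<lambda>(p,k). ennreal (ln (real p) * f p ^ k)) pk * ennreal (f m))"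
    by (intro infsum_cong) (auto simp: PP_def ennreal_mult'' ln_prime_nonneg nn)
  also have "\<dots> = Lenn f * (\<Sum>\<^sub>\<infinity>m\<in>{1..}. ennreal (f m))"
    unfolding Lenn_def by (rule enn_prod)
  finally show ?thesis .
qed

lemma C3:
  assumes cm: "completely_multiplicative f" and nn: "\<And>n. f n \<ge> 0"
  shows "(\<Sum>\<^sub>\<infinity>n\<in>{1..}. ennreal (f n * ln (real n) * ln (real n))) =
    Venn f * (\<Sum>\<^sub>\<infinity>m\<in>{1..}. ennreal (f m)) + Lenn f * (\<Sum>\<^sub>\<infinity>m\<in>{1..}. ennreal (f m * ln (real m)))"
proof -
  have "(\<Sum>\<^sub>\<infinity>n\<in>{1..}. ennreal (f n * ln (real n) * ln (real n))) =
      (\<Sum>\<^sub>\<infinity>n\<in>{1..}. ennreal (f n * ln (real n) * max 0 (ln (real n))))"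
    by (intro infsum_cong) auto
  also have "\<dots> = (\<Sum>\<^sub>\<infinity>((p,k),m)\<in>{((p,k),m). prime p \<and> k \<ge> 1 \<and> m \<ge> 1 \<and> p^k*m \<in> {1..}}.
        ennreal (ln (real p) * f p ^ k * f m * max 0 (ln (real (p^k*m)))))"
    by (rule key[OF cm nn]) auto
  also have "{((p,k),m). prime p \<and> k \<ge> 1 \<and> m \<ge> 1 \<and> p^k*m \<in> {1..}} = PP \<times> {1..}"
  proof (rule set_eqI)
    fix x :: "(nat \<times> nat) \<times> nat"
    obtain p k m where x: "x = ((p,k),m)" by (metis prod.collapse)
    show "x \<in> {((p,k),m). prime p \<and> k \<ge> 1 \<and> m \<ge> 1 \<and> p^k*m \<in> {1..}} \<longleftrightarrow> x \<in> PP \<times> {1..}"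
      unfolding x PP_def using prime_gt_0_nat[of p] by (auto simp: Suc_le_eq)
  qed
  also have "(\<Sum>\<^sub>\<infinity>((p,k),m)\<in>PP \<times> {1..}. ennreal (ln (real p) * f p ^ k * f m * max 0 (ln (real (p^k*m))))) =
      (\<Sum>\<^sub>\<infinity>(pk,m)\<in>PP \<times> {1..}. (\<lambda>(p,k). ennreal (real k * ln (real p) ^ 2 * f p ^ k)) pk * ennreal (f m)
         + (\<lambda>(p,k). ennreal (ln (real p) * f p ^ k)) pk * ennreal (f m * ln (real m)))"
  proof (intro infsum_cong, goal_cases)
    case (1 x)
    then obtain p k m where x: "x = ((p,k),m)" "prime p" "k \<ge> 1" "m \<ge> 1" by (auto simp: PP_def)
    have p0: "real p > 0" using prime_gt_0_nat[OF x(2)] by simp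
    have m0: "real m > 0" using x by simp
    have lnpm: "ln (real (p^k*m)) = real k * ln (real p) + ln (real m)"
      using p0 m0 by (simp add: ln_mult ln_realpow)
    have lm: "ln (real m) \<ge> 0" using x by simp
    have lp: "ln (real p) \<ge> 0" using ln_prime_nonneg[OF x(2)] .
    have "ln (real p) * f p ^ k * f m * max 0 (ln (real (p^k*m))) =
        real k * ln (real p) ^ 2 * f p ^ k * f m + ln (real p) * f p ^ k * (f m * ln (real m))"
      unfolding lnpm using lm lp by (simp add: max_def algebra_simps power2_eq_square)
    then show ?case
      using x lm lp nn[of m] nn[of p]
      by (simp add: ennreal_mult''[symmetric] ennreal_plus[symmetric] del: ennreal_plus)
  qed
  also have "\<dots> = Venn f * (\<Sum>\<^sub>\<infinity>m\<in>{1..}. ennreal (f m)) + Lenn f * (\<Sum>\<^sub>\<infinity>m\<in>{1..}. ennreal (f m * ln (real m)))"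
    unfolding Venn_def Lenn_def by (rule enn_prod2)
  finally show ?thesis .
qed



lemma summ:
  fixes f :: "nat \<Rightarrow> real"
  assumes cm: "completely_multiplicative f" and nn: "\<And>n. f n \<ge> 0"
    and lt1: "\<And>p. prime p \<Longrightarrow> f p < 1"
    and s1: "(\<lambda>p. ln (real p) * (f p / (1 - f p))) summable_on {p. prime p}"
  shows "f summable_on {1..}"
proof -
  define a where "a = (\<Sum>\<^sub>\<infinity>p\<in>{p. prime p}. ln (real p) * (f p / (1 - f p)))"
  have a0: "a \<ge> 0" unfolding a_def
    by (rule infsum_nonneg) (auto simp: nn lt1 ln_prime_nonneg less_imp_le)
  have La: "Lenn f = ennreal a" unfolding a_def by (rule Lenn_eq[OF nn lt1 s1])
  have trunc: "(\<Sum>n\<in>{1..N}. f n * ln (real n)) \<le> a * (\<Sum>n\<in>{1..N}. f n)" for N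
  proof -
    have "ennreal (\<Sum>n\<in>{1..N}. f n * ln (real n)) = (\<Sum>\<^sub>\<infinity>n\<in>{1..N}. ennreal (f n * ln (real n)))"
      by (subst sum_ennreal[symmetric]) (auto simp: nn)
    also have "\<dots> \<le> Lenn f * (\<Sum>\<^sub>\<infinity>m\<in>{1..N}. ennreal (f m))" by (rule C1[OF cm nn])
    also have "\<dots> = ennreal (a * (\<Sum>n\<in>{1..N}. f n))"
      using a0 nn by (simp add: La sum_nonneg ennreal_mult'')
    finally show ?thesis using a0 nn by (simp add: sum_nonneg ennreal_le_iff)
  qed
  define M where "M = nat \<lceil>exp (a + 1)\<rceil>"
  have big: "ln (real n) \<ge> a + 1" if "n > M" for n
  proof -
    have "exp (a + 1) \<le> real M" unfolding M_def by linarith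
    also have "\<dots> \<le> real n" using that by simp
    finally have "exp (a+1) \<le> real n" .
    then show ?thesis by (metis exp_gt_zero exp_le_cancel_iff exp_ln order_less_le_trans)
  qed
  define C where "C = (1 + a) * (\<Sum>n\<in>{1..M}. f n)"
  have bound: "(\<Sum>n\<in>{1..N}. f n) \<le> C" for N
  proof -
    have pw: "f n \<le> f n * (ln (real n) - a) + (1 + a) * (if n \<le> M then f n else 0)" if "n \<in> {1..N}" for n
    proof (cases "n \<le> M")
      case True
      have "ln (real n) \<ge> 0" using that by simp
      then show ?thesis using True nn[of n] by (simp add: algebra_simps)
    next
      case False
      then have "ln (real n) - a \<ge> 1" using big[of n] by simp
      then show ?thesis using False nn[of n] mult_left_mono[of 1 "ln (real n) - a" "f n"] by simp
    qed
    have "(\<Sum>n\<in>{1..N}. f n) \<le> (\<Sum>n\<in>{1..N}. f n * (ln (real n) - a) + (1 + a) * (if n \<le> M then f n else 0))"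
      by (rule sum_mono) (use pw in auto)
    also have "\<dots> = ((\<Sum>n\<in>{1..N}. f n * ln (real n)) - a * (\<Sum>n\<in>{1..N}. f n)) +
        (1 + a) * (\<Sum>n\<in>{1..N}. (if n \<le> M then f n else 0))"
      by (simp add: sum.distrib sum_subtractf sum_distrib_left sum_distrib_right algebra_simps)
    also have "\<dots> \<le> 0 + (1 + a) * (\<Sum>n\<in>{1..M}. f n)"
    proof (rule add_mono)
      show "(\<Sum>n\<in>{1..N}. f n * ln (real n)) - a * (\<Sum>n\<in>{1..N}. f n) \<le> 0" using trunc[of N] by simp
      have "(\<Sum>n\<in>{1..N}. (if n \<le> M then f n else 0)) = (\<Sum>n\<in>{1..N} \<inter> {n. n \<le> M}. f n)"
        by (simp add: sum.inter_restrict)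
      also have "\<dots> \<le> (\<Sum>n\<in>{1..M}. f n)" by (rule sum_mono2) (auto simp: nn)
      finally show "(1 + a) * (\<Sum>n\<in>{1..N}. (if n \<le> M then f n else 0)) \<le> (1 + a) * (\<Sum>n\<in>{1..M}. f n)"
        using a0 by (intro mult_left_mono) auto
    qed
    finally show ?thesis by (simp add: C_def)
  qed
  show ?thesis
  proof (rule nonneg_bdd_above_summable_on)
    show "\<And>x. x \<in> {1..} \<Longrightarrow> f x \<ge> 0" by (simp add: nn)
    show "bdd_above (sum f ` {F. F \<subseteq> {1..} \<and> finite F})"
    proof (rule bdd_aboveI[of _ C])
      fix s assume "s \<in> sum f ` {F. F \<subseteq> {1..} \<and> finite F}"
      then obtain F where F: "F \<subseteq> {1..}" "finite F" "s = sum f F" by auto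
      have "F \<subseteq> {1..Max F}" using F by (auto intro: Max_ge)
      then have "sum f F \<le> (\<Sum>n\<in>{1..Max F}. f n)" by (intro sum_mono2) (auto simp: nn)
      then show "s \<le> C" using bound[of "Max F"] F by simp
    qed
  qed
qed



lemma sq_le_exp:
  fixes t :: real assumes "0 \<le> t" shows "t^2 \<le> 4 * exp t"
proof -
  have "t/2 \<le> exp (t/2)" using exp_ge_add_one_self[of "t/2"] by linarith
  then have "(t/2)^2 \<le> (exp (t/2))^2" using assms by (intro power_mono) auto
  also have "(exp (t/2))^2 = exp t" by (simp add: power2_eq_square exp_add[symmetric])
  finally show ?thesis by (simp add: power2_eq_square)
qed

lemma Vbound:
  fixes f :: "nat \<Rightarrow> real" and l T \<alpha> a s2 :: real
  assumes nn: "\<And>n. f n \<ge> 0" and T0: "T > 0" and al: "\<alpha> > 0"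
    and La: "Lenn f = ennreal a" and a0: "a \<ge> 0"
    and s2: "(\<lambda>(p,k). f p ^ k * real p powr (real k * \<alpha>))
              summable_on {(p, k). prime p \<and> k \<ge> 1 \<and> real k * ln (real p) > T}"
    and s2v: "s2 = (\<Sum>\<^sub>\<infinity>(p,k)\<in>{(p, k). prime p \<and> k \<ge> 1 \<and> real k * ln (real p) > T}.
                   f p ^ k * real p powr (real k * \<alpha>))"
  shows "Venn f \<le> ennreal (T * a + 4 / \<alpha>^2 * s2)"
proof -
  define Ps where "Ps = {(p, k). prime p \<and> k \<ge> 1 \<and> \<not> real k * ln (real p) > T}"
  define Pl where "Pl = {(p, k). prime p \<and> k \<ge> 1 \<and> real k * ln (real p) > T}"
  have PP: "PP = Ps \<union> Pl" "Ps \<inter> Pl = {}" by (auto simp: PP_def Ps_def Pl_def)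
  have s20: "s2 \<ge> 0" unfolding s2v by (rule infsum_nonneg) (auto simp: nn)
  have "Venn f = (\<Sum>\<^sub>\<infinity>(p,k)\<in>Ps. ennreal (real k * ln (real p) ^ 2 * f p ^ k)) +
      (\<Sum>\<^sub>\<infinity>(p,k)\<in>Pl. ennreal (real k * ln (real p) ^ 2 * f p ^ k))"
    unfolding Venn_def PP(1) by (rule enn_Un[OF PP(2)])
  also have "(\<Sum>\<^sub>\<infinity>(p,k)\<in>Ps. ennreal (real k * ln (real p) ^ 2 * f p ^ k)) \<le> ennreal (T * a)"
  proof -
    have "(\<Sum>\<^sub>\<infinity>(p,k)\<in>Ps. ennreal (real k * ln (real p) ^ 2 * f p ^ k)) \<le>
        (\<Sum>\<^sub>\<infinity>(p,k)\<in>Ps. ennreal T * ennreal (ln (real p) * f p ^ k))"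
    proof (rule enn_mono, clarify)
      fix p k assume "(p,k) \<in> Ps"
      then have H: "prime p" "k \<ge> 1" "real k * ln (real p) \<le> T" by (auto simp: Ps_def)
      have "real k * ln (real p) ^ 2 * f p ^ k = (real k * ln (real p)) * (ln (real p) * f p ^ k)"
        by (simp add: power2_eq_square)
      also have "\<dots> \<le> T * (ln (real p) * f p ^ k)"
        using H ln_prime_nonneg[OF H(1)] nn[of p] by (intro mult_right_mono) auto
      finally show "ennreal (real k * ln (real p) ^ 2 * f p ^ k) \<le> ennreal T * ennreal (ln (real p) * f p ^ k)"
        using T0 ln_prime_nonneg[OF H(1)] nn[of p] by (subst ennreal_mult[symmetric]) (auto intro!: ennreal_leI)
    qed
    also have "\<dots> = ennreal T * (\<Sum>\<^sub>\<infinity>(p,k)\<in>Ps. ennreal (ln (real p) * f p ^ k))"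
      by (subst enn_cmult[symmetric]) (simp add: split_beta')
    also have "\<dots> \<le> ennreal T * Lenn f"
      unfolding Lenn_def PP(1) by (intro mult_left_mono enn_subset) auto
    also have "\<dots> = ennreal (T * a)" using La T0 a0 by (simp add: ennreal_mult)
    finally show ?thesis .
  qed
  also have "(\<Sum>\<^sub>\<infinity>(p,k)\<in>Pl. ennreal (real k * ln (real p) ^ 2 * f p ^ k)) \<le> ennreal (4 / \<alpha>^2 * s2)"
  proof -
    have "(\<Sum>\<^sub>\<infinity>(p,k)\<in>Pl. ennreal (real k * ln (real p) ^ 2 * f p ^ k)) \<le>
        (\<Sum>\<^sub>\<infinity>x\<in>Pl. ennreal (4 / \<alpha>^2) * ennreal ((\<lambda>(p,k). f p ^ k * real p powr (real k * \<alpha>)) x))"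
    proof (rule enn_mono, clarify)
      fix p k assume "(p,k) \<in> Pl"
      then have H: "prime p" "k \<ge> 1" "real k * ln (real p) > T" by (auto simp: Pl_def)
      define x where "x = real k * ln (real p)"
      have x0: "x \<ge> 0" using H T0 unfolding x_def by simp
      have lp: "ln (real p) \<ge> 0" using ln_prime_nonneg[OF H(1)] .
      have "real k * ln (real p) ^ 2 \<le> real k ^ 2 * ln (real p) ^ 2"
        using H(2) lp by (intro mult_right_mono) (auto simp: power2_eq_square)
      also have "\<dots> = x ^ 2" by (simp add: x_def power_mult_distrib)
      also have "\<dots> \<le> 4 / \<alpha>^2 * exp (\<alpha> * x)"
      proof -
        have "(\<alpha> * x)^2 \<le> 4 * exp (\<alpha> * x)" using al x0 by (intro sq_le_exp) simp
        then show ?thesis using al by (simp add: field_simps power_mult_distrib)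
      qed
      also have "exp (\<alpha> * x) = real p powr (real k * \<alpha>)"
        using prime_gt_0_nat[OF H(1)] by (simp add: powr_def x_def mult_ac)
      finally have "real k * ln (real p) ^ 2 \<le> 4 / \<alpha>^2 * real p powr (real k * \<alpha>)" .
      then have "real k * ln (real p) ^ 2 * f p ^ k \<le> 4 / \<alpha>^2 * real p powr (real k * \<alpha>) * f p ^ k"
        by (rule mult_right_mono) (simp add: nn)
      then have "real k * ln (real p) ^ 2 * f p ^ k \<le> 4 / \<alpha>^2 * (f p ^ k * real p powr (real k * \<alpha>))"
        by (simp add: mult_ac)
      then show "ennreal (real k * ln (real p) ^ 2 * f p ^ k) \<le>
          ennreal (4 / \<alpha>^2) * ennreal (f p ^ k * real p powr (real k * \<alpha>))"
        using al nn[of p] by (subst ennreal_mult[symmetric]) (auto intro!: ennreal_leI)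
    qed
    also have "\<dots> = ennreal (4 / \<alpha>^2) * (\<Sum>\<^sub>\<infinity>x\<in>Pl. ennreal ((\<lambda>(p,k). f p ^ k * real p powr (real k * \<alpha>)) x))"
      by (rule enn_cmult)
    also have "(\<Sum>\<^sub>\<infinity>x\<in>Pl. ennreal ((\<lambda>(p,k). f p ^ k * real p powr (real k * \<alpha>)) x)) = ennreal s2"
      unfolding s2v Pl_def by (rule enn_real[OF _ s2]) (auto simp: nn)
    also have "ennreal (4 / \<alpha>^2) * ennreal s2 = ennreal (4 / \<alpha>^2 * s2)"
      using al s20 by (subst ennreal_mult) auto
    finally show ?thesis .
  qed
  also have "ennreal (T * a) + ennreal (4 / \<alpha>^2 * s2) = ennreal (T * a + 4 / \<alpha>^2 * s2)"
    using T0 a0 al s20 by (simp add: ennreal_plus)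
  finally show ?thesis by (simp add: add_mono)
qed



lemma cheb:
  fixes f :: "nat \<Rightarrow> real" and y a B :: real
  assumes cm: "completely_multiplicative f" and nn: "\<And>n. f n \<ge> 0"
    and lt1: "\<And>p. prime p \<Longrightarrow> f p < 1"
    and s1: "(\<lambda>p. ln (real p) * (f p / (1 - f p))) summable_on {p. prime p}"
    and a_def: "a = (\<Sum>\<^sub>\<infinity>p\<in>{p. prime p}. ln (real p) * (f p / (1 - f p)))"
    and y0: "y > 0" and a_lt: "a < ln y"
    and Vb: "Venn f \<le> ennreal B" and B0: "B \<ge> 0"
  shows "(\<Sum>\<^sub>\<infinity>n\<in>{1..}. f n) - (\<Sum>n\<in>{1..nat \<lfloor>y\<rfloor>}. f n) \<le> B * (\<Sum>\<^sub>\<infinity>n\<in>{1..}. f n) / (ln y - a)^2"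
proof -
  define S where "S = (\<Sum>\<^sub>\<infinity>n\<in>{1..}. f n)"
  define D where "D = {1::nat..}"
  have a0: "a \<ge> 0" unfolding a_def
    by (rule infsum_nonneg) (auto simp: nn lt1 ln_prime_nonneg less_imp_le)
  have La: "Lenn f = ennreal a" unfolding a_def by (rule Lenn_eq[OF nn lt1 s1])
  have sm: "f summable_on D" unfolding D_def by (rule summ[OF cm nn lt1 s1])
  have S0: "S \<ge> 0" unfolding S_def by (rule infsum_nonneg) (simp add: nn)
  have Senn: "(\<Sum>\<^sub>\<infinity>n\<in>D. ennreal (f n)) = ennreal S"
    unfolding S_def D_def by (rule enn_real[OF _ sm[unfolded D_def]]) (simp add: nn)
  have E1: "(\<Sum>\<^sub>\<infinity>n\<in>D. ennreal (f n * ln (real n))) = ennreal (a * S)"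
    using C2[OF cm nn] La Senn a0 S0 unfolding D_def by (simp add: ennreal_mult)
  have E2: "(\<Sum>\<^sub>\<infinity>n\<in>D. ennreal (f n * ln (real n) * ln (real n))) = Venn f * ennreal S + ennreal (a * (a * S))"
    using C3[OF cm nn] La Senn E1 a0 S0 unfolding D_def by (simp add: ennreal_mult)
  define E3 where "E3 = (\<Sum>\<^sub>\<infinity>n\<in>D. ennreal (f n * (ln (real n) - a)^2))"
  have pw: "ennreal (f n * (ln (real n) - a)^2) + ennreal (2 * a) * ennreal (f n * ln (real n)) =
      ennreal (f n * ln (real n) * ln (real n)) + ennreal (a^2) * ennreal (f n)" if "n \<in> D" for n
  proof -
    have l0: "ln (real n) \<ge> 0" using that by (simp add: D_def)
    have "ennreal (f n * (ln (real n) - a)^2) + ennreal (2 * a) * ennreal (f n * ln (real n)) =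
        ennreal (f n * (ln (real n) - a)^2 + 2 * a * (f n * ln (real n)))"
      using l0 a0 nn[of n] by (simp add: ennreal_mult ennreal_plus)
    also have "f n * (ln (real n) - a)^2 + 2 * a * (f n * ln (real n)) = f n * ln (real n) * ln (real n) + a^2 * f n"
      by (simp add: power2_eq_square algebra_simps)
    also have "ennreal \<dots> = ennreal (f n * ln (real n) * ln (real n)) + ennreal (a^2) * ennreal (f n)"
      using l0 a0 nn[of n] by (simp add: ennreal_mult ennreal_plus)
    finally show ?thesis .
  qed
  have "E3 + ennreal (2 * a) * ennreal (a * S) =
      (\<Sum>\<^sub>\<infinity>n\<in>D. ennreal (f n * (ln (real n) - a)^2) + ennreal (2 * a) * ennreal (f n * ln (real n)))"
    unfolding E3_def E1[symmetric] by (simp add: enn_add enn_cmult)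
  also have "\<dots> = (\<Sum>\<^sub>\<infinity>n\<in>D. ennreal (f n * ln (real n) * ln (real n)) + ennreal (a^2) * ennreal (f n))"
    by (intro infsum_cong pw)
  also have "\<dots> = Venn f * ennreal S + ennreal (a * (a * S)) + ennreal (a^2) * ennreal S"
    by (simp add: enn_add enn_cmult E2 Senn)
  finally have "E3 + ennreal (2 * a * a * S) = Venn f * ennreal S + ennreal (2 * a * a * S)"
    using a0 S0 by (simp add: ennreal_mult[symmetric] ennreal_plus[symmetric] power2_eq_square algebra_simps
        del: ennreal_plus)
  then have "ennreal (2 * a * a * S) + E3 = ennreal (2 * a * a * S) + Venn f * ennreal S"
    by (simp add: add.commute)
  then have E3eq: "E3 = Venn f * ennreal S"
    by (subst (asm) ennreal_add_left_cancel) simp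
  have E3b: "E3 \<le> ennreal (B * S)"
    unfolding E3eq using Vb B0 S0 by (simp add: ennreal_mult mult_right_mono)
  define N0 where "N0 = nat \<lfloor>y\<rfloor>"
  define Tl where "Tl = {Suc N0..}"
  have DU: "D = {1..N0} \<union> Tl" "{1..N0} \<inter> Tl = {}" by (auto simp: D_def Tl_def)
  have smT: "f summable_on Tl" using sm by (rule summable_on_subset_banach) (auto simp: DU)
  define tail where "tail = infsum f Tl"
  have Ssplit: "S = (\<Sum>n\<in>{1..N0}. f n) + tail"
    unfolding S_def D_def[symmetric] tail_def DU(1)
    by (subst infsum_Un_disjoint[OF _ smT DU(2)]) auto
  have gt: "(ln y - a)^2 \<le> (ln (real n) - a)^2" if "n \<in> Tl" for n
  proof -
    have "y < real_of_int \<lfloor>y\<rfloor> + 1" by linarith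
    also have "real_of_int \<lfloor>y\<rfloor> = real N0" using y0 unfolding N0_def by simp
    also have "real N0 + 1 \<le> real n" using that by (simp add: Tl_def)
    finally have "y < real n" by simp
    then have "ln y < ln (real n)" using y0 by simp
    then show ?thesis using a_lt by (intro power_mono) auto
  qed
  have "ennreal (tail * (ln y - a)^2) = (\<Sum>\<^sub>\<infinity>n\<in>Tl. ennreal (f n * (ln y - a)^2))"
    unfolding tail_def
    by (subst infsum_cmult_left'[symmetric], rule enn_real[symmetric])
       (auto simp: nn summable_on_cmult_left smT)
  also have "\<dots> \<le> (\<Sum>\<^sub>\<infinity>n\<in>Tl. ennreal (f n * (ln (real n) - a)^2))"
    by (intro enn_mono ennreal_leI mult_left_mono gt nn)
  also have "\<dots> \<le> E3" unfolding E3_def by (rule enn_subset) (auto simp: DU)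
  also have "\<dots> \<le> ennreal (B * S)" by (rule E3b)
  finally have "tail * (ln y - a)^2 \<le> B * S"
    using B0 S0 by (simp add: ennreal_le_iff)
  then have "tail \<le> B * S / (ln y - a)^2"
    using a_lt by (simp add: pos_le_divide_eq)
  then show ?thesis using Ssplit unfolding S_def N0_def by simp
qed



lemma partial_le:
  fixes f :: "nat \<Rightarrow> real"
  assumes nn: "\<And>n. f n \<ge> 0" and sm: "f summable_on {1..}"
  shows "(\<Sum>n\<in>{1..N}. f n) \<le> (\<Sum>\<^sub>\<infinity>n\<in>{1..}. f n)"
proof -
  have "(\<Sum>n\<in>{1..N}. f n) = (\<Sum>\<^sub>\<infinity>n\<in>{1..N}. f n)" by simp
  also have "\<dots> \<le> (\<Sum>\<^sub>\<infinity>n\<in>{1..}. f n)"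
    by (rule infsum_mono_neutral) (use sm in \<open>auto simp: nn\<close>)
  finally show ?thesis .
qed

lemma one_le_partial:
  fixes f :: "nat \<Rightarrow> real"
  assumes cm: "completely_multiplicative f" and nn: "\<And>n. f n \<ge> 0" and N: "N \<ge> 1"
  shows "1 \<le> (\<Sum>n\<in>{1..N}. f n)"
proof -
  have "(\<Sum>n\<in>{1..1}. f n) \<le> (\<Sum>n\<in>{1..N}. f n)" using N by (intro sum_mono2) (auto simp: nn)
  then show ?thesis using cm by (simp add: completely_multiplicative_def)
qed

lemma ratio_bound:
  fixes f :: "nat \<Rightarrow> real" and y :: real
  assumes cm: "completely_multiplicative f" and nn: "\<And>n. f n \<ge> 0"
    and lt1: "\<And>p. prime p \<Longrightarrow> f p < 1"
    and s1: "(\<lambda>p. ln (real p) * (f p / (1 - f p))) summable_on {p. prime p}"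
    and bnd: "(\<Sum>\<^sub>\<infinity>p\<in>{p. prime p}. ln (real p) * (f p / (1 - f p))) < ln y - ln y / ln (ln y)"
    and y1: "y > exp 1"
    and s2: "(\<lambda>(p, k). f p ^ k * real p powr (real k * ((ln (ln y))\<^sup>2 / ln y)))
                  summable_on {(p, k). prime p \<and> k \<ge> 1 \<and> real k * ln (real p) > ln y / (ln (ln y)) ^ 4}"
  shows "1 - (1 + 4 * (\<Sum>\<^sub>\<infinity>(p, k)\<in>{(p, k). prime p \<and> k \<ge> 1 \<and> real k * ln (real p) > ln y / (ln (ln y)) ^ 4}.
                      f p ^ k * real p powr (real k * ((ln (ln y))\<^sup>2 / ln y)))) / (ln (ln y))^2
         \<le> (\<Sum>n\<in>{1..nat \<lfloor>y\<rfloor>}. f n) / (\<Sum>\<^sub>\<infinity>n\<in>{1..}. f n)"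
    and "(\<Sum>n\<in>{1..nat \<lfloor>y\<rfloor>}. f n) / (\<Sum>\<^sub>\<infinity>n\<in>{1..}. f n) \<le> 1"
proof -
  define l where "l = ln y"
  define ll where "ll = ln (ln y)"
  define \<alpha> where "\<alpha> = (ln (ln y))\<^sup>2 / ln y"
  define T where "T = ln y / (ln (ln y)) ^ 4"
  define s where "s = (\<Sum>\<^sub>\<infinity>(p, k)\<in>{(p, k). prime p \<and> k \<ge> 1 \<and> real k * ln (real p) > ln y / (ln (ln y)) ^ 4}.
                      f p ^ k * real p powr (real k * ((ln (ln y))\<^sup>2 / ln y)))"
  define a where "a = (\<Sum>\<^sub>\<infinity>p\<in>{p. prime p}. ln (real p) * (f p / (1 - f p)))"
  define P where "P = (\<Sum>n\<in>{1..nat \<lfloor>y\<rfloor>}. f n)"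
  define S where "S = (\<Sum>\<^sub>\<infinity>n\<in>{1..}. f n)"
  have y0: "y > 0" using y1 by (meson exp_gt_zero less_trans)
  have l1: "l > 1" unfolding l_def using y1 y0 by (metis exp_gt_zero ln_exp ln_less_cancel_iff)
  have ll0: "ll > 0" unfolding ll_def using l1 by (simp add: l_def)
  have al: "\<alpha> > 0" unfolding \<alpha>_def using ll0 l1 by (simp add: ll_def l_def)
  have T0: "T > 0" unfolding T_def using ll0 l1 by (simp add: ll_def l_def)
  have a0: "a \<ge> 0" unfolding a_def
    by (rule infsum_nonneg) (auto simp: nn lt1 ln_prime_nonneg less_imp_le)
  have La: "Lenn f = ennreal a" unfolding a_def by (rule Lenn_eq[OF nn lt1 s1])
  have s0: "s \<ge> 0" unfolding s_def by (rule infsum_nonneg) (auto simp: nn)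
  have lll: "l / ll > 0" using l1 ll0 by simp
  have a_lt: "a < l - l / ll" using bnd unfolding a_def l_def ll_def .
  have a_l: "a < l" using a_lt lll by linarith
  have Vb: "Venn f \<le> ennreal (T * a + 4 / \<alpha>^2 * s)"
    by (rule Vbound[OF nn T0 al La a0]) (use s2 in \<open>simp_all add: T_def \<alpha>_def s_def\<close>)
  define B where "B = T * a + 4 / \<alpha>^2 * s"
  have B0: "B \<ge> 0" unfolding B_def using T0 a0 s0 al by simp
  have ch: "S - P \<le> B * S / (l - a)^2"
    unfolding S_def P_def B_def l_def
    by (rule cheb[OF cm nn lt1 s1 a_def y0 _ Vb]) (use a_lt lll B0 in \<open>simp_all add: l_def B_def\<close>)
  have sm: "f summable_on {1..}" by (rule summ[OF cm nn lt1 s1])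
  have PS: "P \<le> S" unfolding P_def S_def by (rule partial_le[OF nn sm])
  have P1: "1 \<le> P" unfolding P_def
  proof (rule one_le_partial[OF cm nn])
    have "1 \<le> y" using y1 by (smt (verit) exp_ge_add_one_self)
    then show "1 \<le> nat \<lfloor>y\<rfloor>" by linarith
  qed
  have S0: "S > 0" using PS P1 by simp
  show "P / S \<le> 1" using PS S0 by simp
  have "B / (l - a)^2 \<le> B / (l / ll)^2"
    using a_lt lll B0 by (intro divide_left_mono power_mono mult_pos_pos) auto
  also have "\<dots> = T * a * ll^2 / l^2 + 4 * s * ll^2 / (\<alpha>^2 * l^2)"
    unfolding B_def using ll0 l1 al by (simp add: field_simps)
  also have "T * a * ll^2 / l^2 \<le> T * l * ll^2 / l^2"
    using T0 a_l ll0 l1 by (intro divide_right_mono mult_right_mono mult_left_mono) auto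
  also have "T * l * ll^2 / l^2 = 1 / ll^2"
    unfolding T_def using ll0 l1 by (simp add: l_def ll_def field_simps power_def)
  also have "4 * s * ll^2 / (\<alpha>^2 * l^2) = 4 * s / ll^2"
    unfolding \<alpha>_def using ll0 l1 by (simp add: l_def ll_def field_simps power_def)
  finally have eb: "B / (l - a)^2 \<le> (1 + 4 * s) / ll^2" by (simp add: add_divide_distrib)
  have "1 - P / S = (S - P) / S" using S0 by (simp add: field_simps)
  also have "\<dots> \<le> B / (l - a)^2"
    using ch S0 by (simp add: divide_le_eq field_simps)
  finally show "1 - (1 + 4 * s) / (ln (ln y))^2 \<le> P / S"
    using eb unfolding ll_def by linarith
qed



theorem mainTheorem9:
  fixes f :: "nat \<Rightarrow> nat \<Rightarrow> real" and y :: "nat \<Rightarrow> real"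
  assumes mult: "\<And>i. completely_multiplicative (f i)"
    and nonneg: "\<And>i n. f i n \<ge> 0"
    and lt1: "\<And>i p. prime p \<Longrightarrow> f i p < 1"
    and y_lim: "filterlim y at_top sequentially"
    and sum1: "\<And>i. (\<lambda>p. ln (real p) * (f i p / (1 - f i p))) summable_on {p. prime p}"
    and sum1_bound: "\<And>i. (\<Sum>\<^sub>\<infinity>p\<in>{p. prime p}. ln (real p) * (f i p / (1 - f i p)))
                        < ln (y i) - ln (y i) / ln (ln (y i))"
    and sum2: "eventually (\<lambda>i. (\<lambda>(p, k). f i p ^ k * real p powr (real k * ((ln (ln (y i)))\<^sup>2 / ln (y i))))
                  summable_on {(p, k). prime p \<and> k \<ge> 1 \<and> real k * ln (real p) > ln (y i) / (ln (ln (y i))) ^ 4})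
                sequentially"
    and sum2_lim: "(\<lambda>i. \<Sum>\<^sub>\<infinity>(p, k)\<in>{(p, k). prime p \<and> k \<ge> 1 \<and> real k * ln (real p) > ln (y i) / (ln (ln (y i))) ^ 4}.
                      f i p ^ k * real p powr (real k * ((ln (ln (y i)))\<^sup>2 / ln (y i)))) \<longlonglongrightarrow> 0"
  shows "(\<forall>i. f i summable_on {1..}) \<and>
         (\<lambda>i. \<Sum>n\<in>{1..nat \<lfloor>y i\<rfloor>}. f i n) \<sim>[sequentially] (\<lambda>i. \<Sum>\<^sub>\<infinity>n\<in>{1..}. f i n)"
proof
  show "\<forall>i. f i summable_on {1..}" using summ[OF mult nonneg lt1 sum1] by blast
  define s where "s = (\<lambda>i. \<Sum>\<^sub>\<infinity>(p, k)\<in>{(p, k). prime p \<and> k \<ge> 1 \<and> real k * ln (real p) > ln (y i) / (ln (ln (y i))) ^ 4}.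
                      f i p ^ k * real p powr (real k * ((ln (ln (y i)))\<^sup>2 / ln (y i))))"
  have s_lim: "s \<longlonglongrightarrow> 0" using sum2_lim unfolding s_def .
  define P where "P = (\<lambda>i. \<Sum>n\<in>{1..nat \<lfloor>y i\<rfloor>}. f i n)"
  define S where "S = (\<lambda>i. \<Sum>\<^sub>\<infinity>n\<in>{1..}. f i n)"
  define g where "g = (\<lambda>i. 1 - (1 + 4 * s i) / (ln (ln (y i)))^2)"
  have ey: "eventually (\<lambda>i. y i > exp 1) sequentially"
    using y_lim by (simp add: filterlim_at_top_dense)
  have ev: "eventually (\<lambda>i. g i \<le> P i / S i \<and> P i / S i \<le> 1) sequentially"
    using ey sum2
  proof eventually_elim
    case (elim i)
    show ?case
      unfolding g_def P_def S_def s_def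
      using ratio_bound[OF mult nonneg lt1 sum1 sum1_bound elim(1) elim(2)] by auto
  qed
  have lim_ll: "filterlim (\<lambda>i. ln (ln (y i))) at_top sequentially"
    by (rule filterlim_compose[OF ln_at_top filterlim_compose[OF ln_at_top y_lim]])
  have inv0: "(\<lambda>i. inverse (ln (ln (y i)))) \<longlonglongrightarrow> 0"
    by (rule tendsto_inverse_0_at_top[OF lim_ll])
  have "(\<lambda>i. 1 - (1 + 4 * s i) * (inverse (ln (ln (y i))) * inverse (ln (ln (y i))))) \<longlonglongrightarrow> 1 - (1 + 4 * 0) * (0 * 0)"
    by (intro tendsto_intros s_lim inv0)
  then have g_lim: "g \<longlonglongrightarrow> 1"
    unfolding g_def by (simp add: power2_eq_square divide_inverse)
  have "(\<lambda>i. P i / S i) \<longlonglongrightarrow> 1"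
  proof (rule tendsto_sandwich[OF _ _ g_lim tendsto_const])
    show "eventually (\<lambda>i. g i \<le> P i / S i) sequentially" using ev by (auto elim: eventually_mono)
    show "eventually (\<lambda>i. P i / S i \<le> 1) sequentially" using ev by (auto elim: eventually_mono)
  qed
  then show "(\<lambda>i. \<Sum>n\<in>{1..nat \<lfloor>y i\<rfloor>}. f i n) \<sim>[sequentially] (\<lambda>i. \<Sum>\<^sub>\<infinity>n\<in>{1..}. f i n)"
    unfolding P_def S_def by (rule asymp_equivI')
qed

end
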